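(* Let $m\le n$, $K\in\{0,\ldots,m-1\}$, $\gamma>0$, $\mathcal{C}\subset\mathrm{dom} f\subset\mathbb{R}^{m\times n}$, and consider $$\min_{X\in\mathbb{R}^{m\times n}}\ f(X)+\gamma\mathcal{T}_K(X)+\delta_{\mathcal C}(X),$$ where $f+\delta_{\mathcal C}$ is directionally differentiable. Let $X^*$ be a d-stationary point. Suppose: (C1) every $X\in\mathcal C$ has a singular value decomposition $X=U[\mathrm{diag}(\sigma_1(X),\ldots,\sigma_m(X)),0]V^\top$ ($U,V$ orthogonal) such that $-U[\mathrm{diag}(0,\ldots,0,\sigma_{K+1}(X),\ldots,\sigma_m(X)),0]V^\top\in\mathcal{F}(X;\mathcal C)$; (C2) there is $\Gamma$ with $(f+\delta_{\mathcal C})'(X^*;D)\le\Gamma$ for all $D\in\mathcal{F}(X^*;\mathcal C)$ with $\|D\|_*=1$. If $\gamma>\Gamma$, then $\mathcal{T}_K(X^* )=0$, i.e., $\mathrm{rank}(X^* )\le K$.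
   Context: Truncated nuclear norm: $\mathcal{T}_K(X)=\sum_{i=K+1}^{\min\{m,n\}}\sigma_i(X)$, where $\sigma_i(X)$ is the $i$-th largest singular value. $\|D\|_*$ is the nuclear norm (sum of singular values). $\delta_{\mathcal C}$ is the indicator of $\mathcal C$; $\mathrm{dom} f=\{X\mid f(X)<\infty\}$. Feasible cone $\mathcal{F}(X;\mathcal{C})=\{D\mid \exists\varsigma'>0:\ X+\varsigma D\in\mathcal{C}\ \forall\varsigma\in(0,\varsigma')\}$ for $X\in\mathcal C$. Directional derivative $h'(X;D)=\lim_{\varsigma\searrow0}(h(X+\varsigma D)-h(X))/\varsigma$, assumed to exist in $\mathbb{R}$ for feasible directions. $X^*$ is d-stationary if the objective's directional derivative at $X^*$ is $\ge0$ for all $D\in\mathcal{F}(X^*;\mathcal C)$. *)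

theory Defs
  imports "HOL-Analysis.Analysis" "Jordan_Normal_Form.DL_Rank"
begin

(* Real m x n matrices are JNF matrices "real mat" in carrier_mat m n. *)

definition orthogonal_mat :: "nat \<Rightarrow> real mat \<Rightarrow> bool" where
  "orthogonal_mat k U \<longleftrightarrow> U \<in> carrier_mat k k \<and> U * transpose_mat U = 1\<^sub>m k"

definition rect_diag :: "nat \<Rightarrow> nat \<Rightarrow> (nat \<Rightarrow> real) \<Rightarrow> real mat" where
  "rect_diag m n s = mat m n (\<lambda>(i,j). if i = j then s i else 0)"

definition is_svd :: "real mat \<Rightarrow> (nat \<Rightarrow> real) \<Rightarrow> real mat \<Rightarrow> real mat \<Rightarrow> bool" where
  "is_svd X s U V \<longleftrightarrow>
     orthogonal_mat (dim_row X) U \<and> orthogonal_mat (dim_col X) V \<and>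
     X = U * rect_diag (dim_row X) (dim_col X) s * transpose_mat V"

definition sv_seq :: "nat \<Rightarrow> (nat \<Rightarrow> real) \<Rightarrow> bool" where
  "sv_seq m s \<longleftrightarrow> (\<forall>i<m. 0 \<le> s i) \<and> (\<forall>i j. i \<le> j \<and> j < m \<longrightarrow> s j \<le> s i)
                   \<and> (\<forall>i\<ge>m. s i = 0)"

(* sigma X i = the (i+1)-th largest singular value of X *)
definition sigma :: "real mat \<Rightarrow> nat \<Rightarrow> real" where
  "sigma X = (THE s. sv_seq (dim_row X) s \<and> (\<exists>U V. is_svd X s U V))"

(* truncated nuclear norm T_K(X) = sum_{i=K+1}^{m} sigma_i(X)  (m = number of rows <= n) *)
definition trunc_nuc :: "nat \<Rightarrow> real mat \<Rightarrow> real" where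
  "trunc_nuc K X = (\<Sum>i\<in>{K..<dim_row X}. sigma X i)"

definition nuc_norm :: "real mat \<Rightarrow> real" where
  "nuc_norm X = (\<Sum>i<dim_row X. sigma X i)"

definition feas_cone :: "nat \<Rightarrow> nat \<Rightarrow> real mat set \<Rightarrow> real mat \<Rightarrow> real mat set" where
  "feas_cone m n C X = {D \<in> carrier_mat m n.
      \<exists>e>0. \<forall>t. 0 < t \<and> t < e \<longrightarrow> X + t \<cdot>\<^sub>m D \<in> C}"

definition has_dir_deriv :: "(real mat \<Rightarrow> real) \<Rightarrow> real mat \<Rightarrow> real mat \<Rightarrow> real \<Rightarrow> bool" where
  "has_dir_deriv h X D d \<longleftrightarrow> ((\<lambda>t. (h (X + t \<cdot>\<^sub>m D) - h X) / t) \<longlongrightarrow> d) (at_right 0)"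

end

theory Submission
  imports Defs "HOL-Combinatorics.Permutations" "Jordan_Normal_Form.Char_Poly"
begin

lemma rect_diag_carrier[simp]: "rect_diag m n s \<in> carrier_mat m n"
  by (simp add: rect_diag_def)

lemma rect_diag_dims[simp]: "dim_row (rect_diag m n s) = m" "dim_col (rect_diag m n s) = n"
  by (simp_all add: rect_diag_def)

lemma svd_entry:
  assumes U: "U \<in> carrier_mat m m" and V: "V \<in> carrier_mat n n" and mn: "m \<le> n"
    and i: "i < m" and j: "j < n"
  shows "(U * rect_diag m n s * transpose_mat V) $$ (i,j) = (\<Sum>k<m. U$$(i,k) * s k * V$$(j,k))"
proof -
  have UR: "\<And>l. l < n \<Longrightarrow> (U * rect_diag m n s) $$ (i,l) = (if l < m then U$$(i,l) * s l else 0)"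
  proof -
    fix l assume l: "l < n"
    have "(U * rect_diag m n s) $$ (i,l) = (\<Sum>k<m. U$$(i,k) * (if k = l then s k else 0))"
      using U i l by (simp add: rect_diag_def scalar_prod_def atLeast0LessThan)
    also have "\<dots> = (if l < m then U$$(i,l) * s l else 0)"
      by (simp add: if_distrib[of "\<lambda>x. _ * x"] sum.delta' cong: if_cong)
    finally show "(U * rect_diag m n s) $$ (i,l) = (if l < m then U$$(i,l) * s l else 0)" .
  qed
  have "(U * rect_diag m n s * transpose_mat V) $$ (i,j) = (\<Sum>l<n. (U * rect_diag m n s) $$ (i,l) * V $$ (j,l))"
    using U V i j by (auto simp: scalar_prod_def atLeast0LessThan intro!: sum.cong)
  also have "\<dots> = (\<Sum>l<n. if l < m then U$$(i,l) * s l * V $$ (j,l) else 0)"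
    by (rule sum.cong, simp_all add: UR)
  also have "\<dots> = (\<Sum>l<m. U$$(i,l) * s l * V $$ (j,l))"
    using mn by (simp add: sum.If_cases lessThan_def) (rule sum.cong; auto)
  finally show ?thesis .
qed

lemma orth_entry:
  assumes "orthogonal_mat k U" "i < k" "j < k"
  shows "(\<Sum>l<k. U$$(i,l) * U$$(j,l)) = (if i = j then 1 else 0)"
proof -
  have U: "U \<in> carrier_mat k k" and E: "U * transpose_mat U = 1\<^sub>m k"
    using assms(1) unfolding orthogonal_mat_def by auto
  have "(U * transpose_mat U) $$ (i,j) = (\<Sum>l<k. U$$(i,l) * U$$(j,l))"
    using U assms by (auto simp: scalar_prod_def atLeast0LessThan intro!: sum.cong)
  then show ?thesis using E assms by simp
qed

lemma orth_from_entry: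
  assumes "U \<in> carrier_mat k k" "\<And>i j. i < k \<Longrightarrow> j < k \<Longrightarrow>
     (\<Sum>l<k. U$$(i,l) * U$$(j,l)) = (if i = j then 1 else 0)"
  shows "orthogonal_mat k U"
  unfolding orthogonal_mat_def
proof (intro conjI)
  show "U \<in> carrier_mat k k" by fact
  show "U * transpose_mat U = 1\<^sub>m k"
  proof (rule eq_matI)
    fix i j assume "i < dim_row (1\<^sub>m k)" "j < dim_col (1\<^sub>m k)"
    then have ij: "i < k" "j < k" by auto
    have "(U * transpose_mat U) $$ (i,j) = (\<Sum>l<k. U$$(i,l) * U$$(j,l))"
      using assms ij by (auto simp: scalar_prod_def atLeast0LessThan intro!: sum.cong)
    then show "(U * transpose_mat U) $$ (i,j) = 1\<^sub>m k $$ (i,j)" using assms(2)[OF ij] ij by simp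
  qed (use assms in auto)
qed

definition svdm :: "nat \<Rightarrow> nat \<Rightarrow> real mat \<Rightarrow> (nat \<Rightarrow> real) \<Rightarrow> real mat \<Rightarrow> real mat" where
  "svdm m n U s V = mat m n (\<lambda>(i,j). \<Sum>k<m. U$$(i,k) * s k * V$$(j,k))"

lemma svd_eq_svdm:
  assumes U: "U \<in> carrier_mat m m" and V: "V \<in> carrier_mat n n" and mn: "m \<le> n"
  shows "U * rect_diag m n s * transpose_mat V = svdm m n U s V"
proof (rule eq_matI)
  fix i j assume "i < dim_row (svdm m n U s V)" "j < dim_col (svdm m n U s V)"
  then have ij: "i < m" "j < n" by (auto simp: svdm_def)
  show "(U * rect_diag m n s * transpose_mat V) $$ (i,j) = svdm m n U s V $$ (i,j)"
    using svd_entry[OF U V mn ij] ij by (simp add: svdm_def)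
qed (use assms in \<open>auto simp: svdm_def\<close>)

lemma permute_svd:
  assumes U: "orthogonal_mat m U" and V: "orthogonal_mat n V" and mn: "m \<le> n"
    and p: "p permutes {..<m}" and g: "\<And>k. g k * g k = (1::real)"
  defines "U' \<equiv> mat m m (\<lambda>(i,k). U$$(i, p k) * g (p k))"
    and "V' \<equiv> mat n n (\<lambda>(j,l). V$$(j, p l))"
  shows "orthogonal_mat m U'" "orthogonal_mat n V'"
    "svdm m n U' (\<lambda>k. s (p k) * g (p k)) V' = svdm m n U s V"
proof -
  have bp: "bij_betw p {..<m} {..<m}" using p by (rule permutes_imp_bij)
  define q where "q = p"
  have bq: "bij_betw q {..<n} {..<n}" unfolding q_def
    by (rule permutes_imp_bij, rule permutes_subset[OF p]) (use mn in auto)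
  have Uc: "U \<in> carrier_mat m m" and Vc: "V \<in> carrier_mat n n"
    using U V unfolding orthogonal_mat_def by auto
  show "orthogonal_mat m U'"
  proof (rule orth_from_entry)
    show "U' \<in> carrier_mat m m" unfolding U'_def by simp
    fix i j assume ij: "i < m" "j < m"
    have "(\<Sum>l<m. U'$$(i,l) * U'$$(j,l)) = (\<Sum>l<m. U$$(i, p l) * U$$(j, p l))"
      unfolding U'_def using ij
      by (intro sum.cong) (auto simp: g mult.assoc mult.left_commute[of "g _"] bij_betwE[OF bp])
    also have "\<dots> = (\<Sum>l<m. U$$(i, l) * U$$(j, l))"
      using sum.reindex_bij_betw[OF bp, of "\<lambda>l. U$$(i, l) * U$$(j, l)"] by simp
    finally show "(\<Sum>l<m. U'$$(i,l) * U'$$(j,l)) = (if i = j then 1 else 0)"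
      using orth_entry[OF U ij] by simp
  qed
  show "orthogonal_mat n V'"
  proof (rule orth_from_entry)
    show "V' \<in> carrier_mat n n" unfolding V'_def by simp
    fix i j assume ij: "i < n" "j < n"
    have "(\<Sum>l<n. V'$$(i,l) * V'$$(j,l)) = (\<Sum>l<n. V$$(i, q l) * V$$(j, q l))"
      unfolding V'_def q_def using ij by (intro sum.cong) auto
    also have "\<dots> = (\<Sum>l<n. V$$(i, l) * V$$(j, l))"
      using sum.reindex_bij_betw[OF bq, of "\<lambda>l. V$$(i, l) * V$$(j, l)"] by simp
    finally show "(\<Sum>l<n. V'$$(i,l) * V'$$(j,l)) = (if i = j then 1 else 0)"
      using orth_entry[OF V ij] by simp
  qed
  show "svdm m n U' (\<lambda>k. s (p k) * g (p k)) V' = svdm m n U s V"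
    unfolding svdm_def
  proof (rule eq_matI)
    fix i j assume ij: "i < dim_row (mat m n (\<lambda>(i,j). \<Sum>k<m. U$$(i,k) * s k * V$$(j,k)))"
       "j < dim_col (mat m n (\<lambda>(i,j). \<Sum>k<m. U$$(i,k) * s k * V$$(j,k)))"
    then have ij: "i < m" "j < n" by auto
    have "(\<Sum>k<m. U'$$(i,k) * (s (p k) * g (p k)) * V'$$(j,k)) = (\<Sum>k<m. U$$(i,p k) * s (p k) * V$$(j,p k))"
      unfolding U'_def V'_def using ij mn
      by (intro sum.cong) (auto simp: bij_betwE[OF bp] g mult.assoc mult.left_commute[of "g _"])
    also have "\<dots> = (\<Sum>k<m. U$$(i,k) * s k * V$$(j,k))"
      using sum.reindex_bij_betw[OF bp, of "\<lambda>k. U$$(i,k) * s k * V$$(j,k)"] by simp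
    finally show "mat m n (\<lambda>(i,j). \<Sum>k<m. U'$$(i,k) * (s (p k) * g (p k)) * V'$$(j,k)) $$ (i,j) =
        mat m n (\<lambda>(i,j). \<Sum>k<m. U$$(i,k) * s k * V$$(j,k)) $$ (i,j)" using ij by simp
  qed auto
qed

lemma svd_sorted_exists:
  assumes X: "X \<in> carrier_mat m n" and mn: "m \<le> n" and svd: "is_svd X s U V"
  shows "\<exists>(s'::nat \<Rightarrow> real) U' V'. sv_seq m s' \<and> is_svd X s' U' V' \<and>
           mset (map s' [0..<m]) = mset (map (\<lambda>i. \<bar>s i\<bar>) [0..<m])"
proof -
  have dims: "dim_row X = m" "dim_col X = n" using X by auto
  have U: "orthogonal_mat m U" and V: "orthogonal_mat n V" and XU: "X = U * rect_diag m n s * transpose_mat V"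
    using svd unfolding is_svd_def dims by auto
  have Uc: "U \<in> carrier_mat m m" and Vc: "V \<in> carrier_mat n n"
    using U V unfolding orthogonal_mat_def by auto
  define xs where "xs = map (\<lambda>i. \<bar>s i\<bar>) [0..<m]"
  define ys where "ys = rev (sort xs)"
  have "mset ys = mset xs" unfolding ys_def by simp
  then obtain p where p0: "p permutes {..<length xs}" and pl: "permute_list p xs = ys"
    by (rule mset_eq_permutation)
  have lx: "length xs = m" unfolding xs_def by simp
  have p: "p permutes {..<m}" using p0 lx by simp
  have pk: "\<And>k. k < m \<Longrightarrow> p k < m" using p by (meson lessThan_iff permutes_in_image)
  have ysk: "\<And>k. k < m \<Longrightarrow> ys ! k = \<bar>s (p k)\<bar>"
  proof -
    fix k assume k: "k < m"
    have "ys ! k = xs ! p k" using pl[symmetric] k lx by (simp add: permute_list_def)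
    then show "ys ! k = \<bar>s (p k)\<bar>" using pk[OF k] by (simp add: xs_def)
  qed
  define g where "g = (\<lambda>k. if s k < 0 then -1 else (1::real))"
  have g: "\<And>k. g k * g k = 1" unfolding g_def by auto
  define U' where "U' \<equiv> mat m m (\<lambda>(i,k). U$$(i, p k) * g (p k))"
  define V' where "V' \<equiv> mat n n (\<lambda>(j,l). V$$(j, p l))"
  have ps1: "orthogonal_mat m U'" unfolding U'_def by (rule permute_svd(1)[OF U V mn p g])
  have ps2: "orthogonal_mat n V'" unfolding V'_def by (rule permute_svd(2)[OF U V mn p g])
  have ps3: "svdm m n U' (\<lambda>k. s (p k) * g (p k)) V' = svdm m n U s V"
    unfolding U'_def V'_def by (rule permute_svd(3)[OF U V mn p g])
  define s' where "s' = (\<lambda>k. if k < m then \<bar>s (p k)\<bar> else 0)"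
  have "svdm m n U' s' V' = svdm m n U' (\<lambda>k. s (p k) * g (p k)) V'"
    unfolding svdm_def s'_def g_def
    by (rule cong[OF refl, where f="mat m n"], rule ext, auto intro!: sum.cong)
  also have "\<dots> = svdm m n U s V" by (rule ps3)
  finally have E: "svdm m n U' s' V' = svdm m n U s V" .
  have U'c: "U' \<in> carrier_mat m m" and V'c: "V' \<in> carrier_mat n n" unfolding U'_def V'_def by auto
  have svd': "is_svd X s' U' V'"
    unfolding is_svd_def dims using ps1 ps2 XU E svd_eq_svdm[OF Uc Vc mn] svd_eq_svdm[OF U'c V'c mn]
    by simp
  have ms: "map s' [0..<m] = ys"
    by (rule nth_equalityI) (auto simp: ys_def lx s'_def ysk[simplified ys_def])
  have sorted: "sorted (sort xs)" by simp
  have sv: "sv_seq m s'"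
    unfolding sv_seq_def
  proof (intro conjI allI impI)
    fix i j assume ij: "i \<le> j \<and> j < m"
    have "s' j = ys ! j" "s' i = ys ! i" using ij ysk by (auto simp: s'_def)
    moreover have "ys ! j = sort xs ! (m - Suc j)" "ys ! i = sort xs ! (m - Suc i)"
      using ij lx by (auto simp: ys_def rev_nth)
    moreover have "sort xs ! (m - Suc j) \<le> sort xs ! (m - Suc i)"
      using sorted ij lx by (auto simp: sorted_iff_nth_mono)
    ultimately show "s' j \<le> s' i" by simp
  qed (auto simp: s'_def)
  show ?thesis using sv svd' ms \<open>mset ys = mset xs\<close> unfolding xs_def by blast
qed


lemma poly_prod_linear_root:
  fixes ys :: "real list"
  shows "poly (prod_list (map (\<lambda>a. [:-a,1:]) ys)) x = 0 \<Longrightarrow> x \<in> set ys"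
  by (induction ys) auto

lemma prod_list_map_remove1':
  fixes f :: "'a \<Rightarrow> 'b::comm_monoid_mult"
  shows "x \<in> set ys \<Longrightarrow> prod_list (map f ys) = f x * prod_list (map f (remove1 x ys))"
  by (induction ys) (auto simp: mult.left_commute)

lemma prod_linear_mset:
  fixes xs ys :: "real list"
  assumes "prod_list (map (\<lambda>a. [:-a,1:]) xs) = prod_list (map (\<lambda>a. [:-a,1:]) ys)"
  shows "mset xs = mset ys"
  using assms
proof (induction xs arbitrary: ys)
  case Nil
  show ?case
  proof (cases ys)
    case (Cons y ys')
    have "poly (prod_list (map (\<lambda>a. [:-a,1:]) ys)) y = 0"
      using Cons by simp
    then have "poly (1::real poly) y = 0" using Nil by simp
    then show ?thesis by simp
  qed simp
next
  case (Cons x xs)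
  have "poly (prod_list (map (\<lambda>a. [:-a,1:]) ys)) x = 0"
    using Cons.prems[symmetric] by simp
  then have "x \<in> set ys" by (rule poly_prod_linear_root)
  then have "prod_list (map (\<lambda>a. [:-a,1:]) ys) = [:-x,1:] * prod_list (map (\<lambda>a. [:-a,1:]) (remove1 x ys))"
    by (rule prod_list_map_remove1')
  with Cons.prems have "[:-x,1:] * prod_list (map (\<lambda>a. [:-a,1:]) xs) = [:-x,1:] * prod_list (map (\<lambda>a. [:-a,1:]) (remove1 x ys))"
    by (simp only: list.map prod_list.Cons)
  moreover have nz: "[:-x,1:] \<noteq> (0::real poly)" by simp
  ultimately have "prod_list (map (\<lambda>a. [:-a,1:]) xs) = prod_list (map (\<lambda>a. [:-a,1:]) (remove1 x ys))"
    using mult_left_cancel[OF nz] by blast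
  from Cons.IH[OF this] have "mset xs = mset (remove1 x ys)" .
  then show ?case using \<open>x \<in> set ys\<close> by simp
qed


definition Dg :: "nat \<Rightarrow> (nat \<Rightarrow> real) \<Rightarrow> real mat" where
  "Dg m s = mat m m (\<lambda>(i,j). if i = j then s i ^ 2 else 0)"

lemma RRt: assumes mn: "m \<le> n"
  shows "rect_diag m n s * transpose_mat (rect_diag m n s) = Dg m s"
proof (rule eq_matI)
  fix i j assume "i < dim_row (Dg m s)" "j < dim_col (Dg m s)"
  then have ij: "i < m" "j < m" by (auto simp: Dg_def)
  have "(rect_diag m n s * transpose_mat (rect_diag m n s)) $$ (i,j)
      = (\<Sum>l<n. (if i = l then s i else 0) * (if j = l then s j else 0))"
    using ij mn by (auto simp: scalar_prod_def atLeast0LessThan rect_diag_def intro!: sum.cong)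
  also have "\<dots> = (if i = j then s i ^ 2 else 0)"
    using ij mn by (auto simp: if_distrib[of "\<lambda>x. _ * x"] power2_eq_square cong: if_cong)
  finally show "(rect_diag m n s * transpose_mat (rect_diag m n s)) $$ (i,j) = Dg m s $$ (i,j)"
    using ij by (simp add: Dg_def)
qed (auto simp: Dg_def)

lemma char_poly_XXt:
  assumes X: "X \<in> carrier_mat m n" and mn: "m \<le> n" and svd: "is_svd X s U V"
  shows "char_poly (X * transpose_mat X) = prod_list (map (\<lambda>a. [:-a,1:]) (map (\<lambda>i. s i ^ 2) [0..<m]))"
proof -
  have dims: "dim_row X = m" "dim_col X = n" using X by auto
  have U: "orthogonal_mat m U" and V: "orthogonal_mat n V" and Xe: "X = U * rect_diag m n s * transpose_mat V"
    using svd unfolding is_svd_def dims by auto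
  have Uc: "U \<in> carrier_mat m m" and Vc: "V \<in> carrier_mat n n"
    and UUt: "U * transpose_mat U = 1\<^sub>m m" and VVt: "V * transpose_mat V = 1\<^sub>m n"
    using U V unfolding orthogonal_mat_def by auto
  have UtU: "transpose_mat U * U = 1\<^sub>m m"
    by (rule mat_mult_left_right_inverse[OF Uc _ UUt]) (use Uc in simp)
  have VtV: "transpose_mat V * V = 1\<^sub>m n"
    by (rule mat_mult_left_right_inverse[OF Vc _ VVt]) (use Vc in simp)
  define R where "R = rect_diag m n s"
  have Rc: "R \<in> carrier_mat m n" unfolding R_def by simp
  have Utc: "transpose_mat U \<in> carrier_mat m m" and Vtc: "transpose_mat V \<in> carrier_mat n n"
    and Rtc: "transpose_mat R \<in> carrier_mat n m" using Uc Vc Rc by auto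
  have Xt: "transpose_mat X = V * (transpose_mat R * transpose_mat U)"
    unfolding Xe R_def[symmetric]
    using transpose_mult[OF mult_carrier_mat[OF Uc Rc] Vtc] transpose_mult[OF Uc Rc] Vc by simp
  have URc: "U * R \<in> carrier_mat m n" using Uc Rc by simp
  have X2: "X * transpose_mat X = (U * R * transpose_mat V) * (V * (transpose_mat R * transpose_mat U))"
    by (simp only: Xt) (simp only: Xe R_def)
  have "X * transpose_mat X = (U * R) * (transpose_mat V * (V * (transpose_mat R * transpose_mat U)))"
    unfolding X2
    by (rule assoc_mult_mat[OF URc Vtc]) (use Vc Rtc Utc in auto)
  also have "transpose_mat V * (V * (transpose_mat R * transpose_mat U)) = transpose_mat R * transpose_mat U"
    using assoc_mult_mat[OF Vtc Vc, of "transpose_mat R * transpose_mat U" m, symmetric] VtV Rtc Utc by simp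
  also have "(U * R) * (transpose_mat R * transpose_mat U) = U * (R * transpose_mat R) * transpose_mat U"
  proof -
    have RUc: "transpose_mat R * transpose_mat U \<in> carrier_mat n m" using Rtc Utc by simp
    have RRc: "R * transpose_mat R \<in> carrier_mat m m" using Rtc Rc by simp
    show ?thesis
      by (simp only: assoc_mult_mat[OF Uc Rc RUc] assoc_mult_mat[OF Uc RRc Utc] assoc_mult_mat[OF Rc Rtc Utc])
  qed
  finally have XX: "X * transpose_mat X = U * Dg m s * transpose_mat U"
    unfolding R_def RRt[OF mn] .
  have Dc: "Dg m s \<in> carrier_mat m m" by (simp add: Dg_def)
  have "similar_mat (X * transpose_mat X) (Dg m s)"
    by (rule similar_matI[of _ _ U "transpose_mat U" m]) (use XX Uc Dc UUt UtU X in auto)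
  then have "char_poly (X * transpose_mat X) = char_poly (Dg m s)" by (rule char_poly_similar)
  also have "\<dots> = (\<Prod>a\<leftarrow>diag_mat (Dg m s). [:- a, 1:])"
    by (rule char_poly_upper_triangular[OF Dc]) (auto simp: upper_triangular_def Dg_def)
  also have "diag_mat (Dg m s) = map (\<lambda>i. s i ^ 2) [0..<m]"
    by (auto simp: diag_mat_def Dg_def)
  finally show ?thesis by simp
qed


lemma sv_unique:
  assumes X: "X \<in> carrier_mat m n" and mn: "m \<le> n"
    and s: "is_svd X s U V" "sv_seq m s" and t: "is_svd X t U' V'" "sv_seq m t"
  shows "s = t"
proof -
  define A where "A = map (\<lambda>i. s i ^ 2) [0..<m]"
  define B where "B = map (\<lambda>i. t i ^ 2) [0..<m]"
  have "mset A = mset B" unfolding A_def B_def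
    by (rule prod_linear_mset) (use char_poly_XXt[OF X mn s(1)] char_poly_XXt[OF X mn t(1)] in simp)
  have srt: "sorted (rev (map (\<lambda>i. u i ^ 2) [0..<m]))" if u: "sv_seq m u" for u :: "nat \<Rightarrow> real"
  proof -
    have "(u (m - Suc i))\<^sup>2 \<le> (u (m - Suc j))\<^sup>2" if "i \<le> j" "j < m" for i j
    proof -
      have "u (m - Suc i) \<le> u (m - Suc j)" using u that unfolding sv_seq_def by auto
      moreover have "0 \<le> u (m - Suc i)" using u that unfolding sv_seq_def by auto
      ultimately show ?thesis by (simp add: power_mono)
    qed
    then show ?thesis by (auto simp: sorted_iff_nth_mono rev_nth)
  qed
  have "sort (rev B) = rev A"
    by (rule properties_for_sort) (use \<open>mset A = mset B\<close> srt[OF s(2)] in \<open>simp_all add: A_def\<close>)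
  moreover have "sort (rev B) = rev B" using srt[OF t(2)] unfolding B_def by (rule sorted_sort_id)
  ultimately have AB: "A = B" by simp
  show ?thesis
  proof
    fix i show "s i = t i"
    proof (cases "i < m")
      case True
      have "A ! i = B ! i" using AB by simp
      then have "s i ^ 2 = t i ^ 2" using True by (simp add: A_def B_def)
      moreover have "0 \<le> s i" "0 \<le> t i" using s(2) t(2) True unfolding sv_seq_def by auto
      ultimately show ?thesis by simp
    next
      case False
      then show ?thesis using s(2) t(2) unfolding sv_seq_def by auto
    qed
  qed
qed

lemma sigma_eq:
  assumes X: "X \<in> carrier_mat m n" and mn: "m \<le> n" and s: "is_svd X s U V" "sv_seq m s"
  shows "sigma X = s"
proof -
  have dr: "dim_row X = m" using X by auto
  show ?thesis unfolding sigma_def dr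
    by (rule the_equality) (use s sv_unique[OF X mn] in blast)+
qed

lemma sigma_props:
  assumes X: "X \<in> carrier_mat m n" and mn: "m \<le> n" and svd: "is_svd X s U V"
  shows "sv_seq m (sigma X)" "\<exists>U V. is_svd X (sigma X) U V"
    "mset (map (sigma X) [0..<m]) = mset (map (\<lambda>i. \<bar>s i\<bar>) [0..<m])"
proof -
  obtain s' U' V' where s': "sv_seq m s'" "is_svd X s' U' V'"
    "mset (map s' [0..<m]) = mset (map (\<lambda>i. \<bar>s i\<bar>) [0..<m])"
    using svd_sorted_exists[OF X mn svd] by blast
  have "sigma X = s'" by (rule sigma_eq[OF X mn s'(2,1)])
  then show "sv_seq m (sigma X)" "\<exists>U V. is_svd X (sigma X) U V"
    "mset (map (sigma X) [0..<m]) = mset (map (\<lambda>i. \<bar>s i\<bar>) [0..<m])" using s' by auto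
qed

lemma nuc_norm_svd:
  assumes X: "X \<in> carrier_mat m n" and mn: "m \<le> n" and svd: "is_svd X s U V"
  shows "nuc_norm X = (\<Sum>i<m. \<bar>s i\<bar>)"
proof -
  have dr: "dim_row X = m" using X by auto
  have "nuc_norm X = sum_list (map (sigma X) [0..<m])"
    unfolding nuc_norm_def dr by (simp add: sum_list_distinct_conv_sum_set atLeast0LessThan[symmetric])
  also have "\<dots> = sum_mset (mset (map (sigma X) [0..<m]))" by (rule sum_mset_sum_list[symmetric])
  also have "\<dots> = sum_mset (mset (map (\<lambda>i. \<bar>s i\<bar>) [0..<m]))" using sigma_props(3)[OF X mn svd] by simp
  also have "\<dots> = (\<Sum>i<m. \<bar>s i\<bar>)"
    by (simp only: sum_mset_sum_list, simp add: sum_list_distinct_conv_sum_set atLeast0LessThan[symmetric])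
  finally show ?thesis .
qed


lemma rank_svdm:
  fixes U V :: "real mat"
  assumes K: "K \<le> m" and z: "\<And>k. K \<le> k \<Longrightarrow> k < m \<Longrightarrow> s k = 0"
  shows "vec_space.rank m (svdm m n U s V) \<le> K"
proof -
  define A where "A N = mat m n (\<lambda>(i,j). \<Sum>k<N. U$$(i,k) * s k * V$$(j,k))" for N
  have "vec_space.rank m (A N) \<le> N" for N
  proof (induction N)
    case 0
    have "A 0 = 0\<^sub>m m n" unfolding A_def by (rule eq_matI) auto
    then show ?case using vec_space.rank_0I[of m n] by simp
  next
    case (Suc N)
    define B where "B = mat m n (\<lambda>(i,j). U$$(i,N) * s N * V$$(j,N))"
    have "A (Suc N) = A N + B" unfolding A_def B_def by (rule eq_matI) auto
    moreover have "vec_space.rank m B \<le> 1"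
      by (rule vec_space.rank_le_1_product_entries[of B m n "\<lambda>r. U$$(r,N) * s N" "\<lambda>c. V$$(c,N)"])
        (auto simp: B_def)
    moreover have "vec_space.rank m (A N + B) \<le> vec_space.rank m (A N) + vec_space.rank m B"
      by (rule vec_space.rank_subadditive) (auto simp: A_def B_def)
    ultimately show ?case using Suc.IH by simp
  qed
  moreover have "svdm m n U s V = A K"
    unfolding svdm_def A_def
  proof (rule cong[OF refl, where f="mat m n"], rule ext, clarsimp)
    fix i j
    have "(\<Sum>k<m. U$$(i,k) * s k * V$$(j,k)) = (\<Sum>k\<in>{..<K} \<union> {K..<m}. U$$(i,k) * s k * V$$(j,k))"
      using K by (intro sum.cong) auto
    also have "\<dots> = (\<Sum>k<K. U$$(i,k) * s k * V$$(j,k))"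
      by (subst sum.union_disjoint) (auto simp: z)
    finally show "(\<Sum>k<m. U$$(i,k) * s k * V$$(j,k)) = (\<Sum>k<K. U$$(i,k) * s k * V$$(j,k))" .
  qed
  ultimately show ?thesis by simp
qed


lemma svdm_comb:
  assumes mn: "m \<le> n"
  shows "svdm m n U s V + c \<cdot>\<^sub>m (- svdm m n U b V) = svdm m n U (\<lambda>i. s i - c * b i) V"
  unfolding svdm_def
  by (rule eq_matI) (auto simp: algebra_simps sum_distrib_left sum_subtractf[symmetric] intro!: sum.cong)

lemma svdm_smult:
  shows "c \<cdot>\<^sub>m (- svdm m n U b V) = svdm m n U (\<lambda>i. - (c * b i)) V"
  unfolding svdm_def
  by (rule eq_matI) (auto simp: algebra_simps sum_distrib_left sum_negf[symmetric] intro!: sum.cong)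

theorem mainTheorem14:
  fixes m n K :: nat and \<gamma> \<Gamma> :: real and f :: "real mat \<Rightarrow> real"
    and C :: "real mat set" and Xs :: "real mat"
  assumes mn: "m \<le> n"
    and K: "K < m"
    and gam: "\<gamma> > 0"
    and C_sub: "C \<subseteq> carrier_mat m n"
    and dir_diff: "\<forall>X\<in>C. \<forall>D\<in>feas_cone m n C X. \<exists>d. has_dir_deriv f X D d"
    and Xs_C: "Xs \<in> C"
    and dstat: "\<forall>D\<in>feas_cone m n C Xs.
                 \<exists>d. has_dir_deriv (\<lambda>X. f X + \<gamma> * trunc_nuc K X) Xs D d \<and> d \<ge> 0"
    and C1: "\<forall>X\<in>C. \<exists>U V. is_svd X (sigma X) U V \<and>
               - (U * rect_diag m n (\<lambda>i. if K \<le> i then sigma X i else 0) * transpose_mat V)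
                 \<in> feas_cone m n C X"
    and C2: "\<forall>D\<in>feas_cone m n C Xs. nuc_norm D = 1 \<longrightarrow>
               (\<forall>d. has_dir_deriv f Xs D d \<longrightarrow> d \<le> \<Gamma>)"
    and gG: "\<gamma> > \<Gamma>"
  shows "trunc_nuc K Xs = 0 \<and> vec_space.rank m Xs \<le> K"
proof -
  have Xc: "Xs \<in> carrier_mat m n" using C_sub Xs_C by auto
  have dims: "dim_row Xs = m" "dim_col Xs = n" using Xc by auto
  define s where "s = sigma Xs"
  define b where "b = (\<lambda>i. if K \<le> i then s i else 0)"
  obtain U V where svd: "is_svd Xs s U V"
    and Dfeas: "- (U * rect_diag m n b * transpose_mat V) \<in> feas_cone m n C Xs"
    using C1 Xs_C unfolding s_def b_def by blast
  have sv: "sv_seq m s" using sigma_props(1)[OF Xc mn svd] unfolding s_def .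
  have U: "orthogonal_mat m U" and V: "orthogonal_mat n V" and Xe: "Xs = U * rect_diag m n s * transpose_mat V"
    using svd unfolding is_svd_def dims by auto
  have Uc: "U \<in> carrier_mat m m" and Vc: "V \<in> carrier_mat n n"
    using U V unfolding orthogonal_mat_def by auto
  note sE = svd_eq_svdm[OF Uc Vc mn]
  have Xsv: "Xs = svdm m n U s V" using Xe sE by simp
  define Dm where "Dm = - svdm m n U b V"
  have Dm_feas: "Dm \<in> feas_cone m n C Xs" using Dfeas sE unfolding Dm_def by simp
  define T where "T = (\<Sum>i\<in>{K..<m}. s i)"
  have TK: "trunc_nuc K Xs = T" unfolding trunc_nuc_def T_def s_def dims ..
  have snn: "0 \<le> s i" for i
  proof (cases "i < m")
    case True then show ?thesis using sv unfolding sv_seq_def by blast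
  next
    case False then show ?thesis using sv unfolding sv_seq_def by simp
  qed
  have T0: "T \<ge> 0" unfolding T_def by (rule sum_nonneg) (simp add: snn)
  have Tz: "T = 0"
  proof (rule ccontr)
    assume "T \<noteq> 0"
    with T0 have Tp: "T > 0" by simp
    define D' where "D' = (1/T) \<cdot>\<^sub>m Dm"
    from Dm_feas obtain e where e: "e > 0" "\<And>t. 0 < t \<Longrightarrow> t < e \<Longrightarrow> Xs + t \<cdot>\<^sub>m Dm \<in> C"
      and Dmc: "Dm \<in> carrier_mat m n"
      unfolding feas_cone_def by blast
    have D'c: "D' \<in> carrier_mat m n" unfolding D'_def using Dmc by simp
    have XD: "Xs + t \<cdot>\<^sub>m D' = Xs + (t / T) \<cdot>\<^sub>m Dm" for t
    proof -
      have "t \<cdot>\<^sub>m ((1/T) \<cdot>\<^sub>m Dm) = (t / T) \<cdot>\<^sub>m Dm" by (rule eq_matI) auto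
      then show ?thesis unfolding D'_def by simp
    qed
    have D'feas: "D' \<in> feas_cone m n C Xs"
      unfolding feas_cone_def
    proof (intro CollectI conjI D'c exI[of _ "e * T"] allI impI)
      show "0 < e * T" using e Tp by simp
      fix t assume "0 < t \<and> t < e * T"
      then have "0 < t / T" "t / T < e" using Tp by (auto simp: field_simps)
      then show "Xs + t \<cdot>\<^sub>m D' \<in> C" unfolding XD using e by blast
    qed
    have D'svdm: "D' = svdm m n U (\<lambda>i. - (1/T * b i)) V"
      unfolding D'_def Dm_def by (rule svdm_smult)
    have D'svd: "is_svd D' (\<lambda>i. - (1/T * b i)) U V"
      unfolding is_svd_def using D'c U V D'svdm svd_eq_svdm[OF Uc Vc mn] by auto
    have sumb: "(\<Sum>i<m. b i) = T"
    proof -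
      have "(\<Sum>i<m. b i) = (\<Sum>i\<in>{..<K} \<union> {K..<m}. b i)" using K by (intro sum.cong) auto
      also have "\<dots> = (\<Sum>i\<in>{K..<m}. b i)" by (subst sum.union_disjoint) (auto simp: b_def)
      also have "\<dots> = T" unfolding T_def b_def by simp
      finally show ?thesis .
    qed
    have "nuc_norm D' = (\<Sum>i<m. \<bar>- (1/T * b i)\<bar>)" by (rule nuc_norm_svd[OF D'c mn D'svd])
    also have "\<dots> = (\<Sum>i<m. 1/T * b i)" using Tp by (intro sum.cong) (auto simp: b_def snn)
    also have "\<dots> = 1" using Tp sumb by (simp add: sum_divide_distrib[symmetric])
    finally have nn: "nuc_norm D' = 1" .
    obtain df where df: "has_dir_deriv f Xs D' df" using dir_diff Xs_C D'feas by blast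
    have dfG: "df \<le> \<Gamma>" using C2 D'feas nn df by blast
    obtain d where d: "has_dir_deriv (\<lambda>X. f X + \<gamma> * trunc_nuc K X) Xs D' d" "d \<ge> 0"
      using dstat D'feas by blast
    have tn: "trunc_nuc K (Xs + t \<cdot>\<^sub>m D') = T - t" if t: "0 < t" "t < T" for t
    proof -
      define st where "st = (\<lambda>i. s i - t / T * b i)"
      have eq: "Xs + t \<cdot>\<^sub>m D' = svdm m n U st V"
        by (simp only: XD, simp only: Xsv Dm_def st_def, rule svdm_comb[OF mn])
      have c: "Xs + t \<cdot>\<^sub>m D' \<in> carrier_mat m n" using Xc D'c by simp
      have tsv: "is_svd (Xs + t \<cdot>\<^sub>m D') st U V"
        unfolding is_svd_def using c U V eq svd_eq_svdm[OF Uc Vc mn] by auto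
      have fr: "0 \<le> 1 - t / T" "1 - t / T \<le> 1" using t Tp by auto
      have stv: "st i = (if K \<le> i then (1 - t / T) * s i else s i)" for i
        unfolding st_def b_def by (auto simp: algebra_simps)
      have svt: "sv_seq m st"
        unfolding sv_seq_def
      proof (intro conjI allI impI)
        fix i assume "i < m" then show "0 \<le> st i" using fr snn by (simp add: stv)
      next
        fix i j assume ij: "i \<le> j \<and> j < m"
        have sij: "s j \<le> s i" using sv ij unfolding sv_seq_def by blast
        have "(1 - t / T) * s j \<le> s j" using fr snn[of j] by (simp add: mult_left_le_one_le)
        moreover have "(1 - t / T) * s j \<le> (1 - t / T) * s i" using fr sij by (simp add: mult_left_mono)
        ultimately show "st j \<le> st i" using ij sij by (auto simp: stv)
      next
        fix i :: nat assume "m \<le> i" then show "st i = 0" using sv unfolding sv_seq_def st_def b_def by auto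
      qed
      have "sigma (Xs + t \<cdot>\<^sub>m D') = st" by (rule sigma_eq[OF c mn tsv svt])
      then have "trunc_nuc K (Xs + t \<cdot>\<^sub>m D') = (\<Sum>i\<in>{K..<m}. (1 - t / T) * s i)"
        unfolding trunc_nuc_def using c by (auto simp: stv intro!: sum.cong)
      also have "\<dots> = (1 - t / T) * T" unfolding T_def by (simp add: sum_distrib_left)
      also have "\<dots> = T - t" using Tp by (simp add: field_simps)
      finally show ?thesis .
    qed
    have lim: "((\<lambda>t. (f (Xs + t \<cdot>\<^sub>m D') - f Xs) / t - \<gamma>) \<longlongrightarrow> df - \<gamma>) (at_right 0)"
      using df unfolding has_dir_deriv_def by (intro tendsto_intros)
    have ev: "\<forall>\<^sub>F t in at_right 0. (f (Xs + t \<cdot>\<^sub>m D') - f Xs) / t - \<gamma> =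
        ((f (Xs + t \<cdot>\<^sub>m D') + \<gamma> * trunc_nuc K (Xs + t \<cdot>\<^sub>m D')) - (f Xs + \<gamma> * trunc_nuc K Xs)) / t"
    proof -
      have "\<forall>\<^sub>F t in at_right 0. t < T" using Tp by (simp add: eventually_at_right_less eventually_at_right_field) (use Tp in \<open>auto simp: eventually_at_right_field\<close>)
      moreover have "\<forall>\<^sub>F t in at_right (0::real). 0 < t" by (simp add: eventually_at_right_less)
      ultimately show ?thesis
      proof (rule eventually_elim2)
        fix t :: real assume t: "t < T" "0 < t"
        show "(f (Xs + t \<cdot>\<^sub>m D') - f Xs) / t - \<gamma> =
          ((f (Xs + t \<cdot>\<^sub>m D') + \<gamma> * trunc_nuc K (Xs + t \<cdot>\<^sub>m D')) - (f Xs + \<gamma> * trunc_nuc K Xs)) / t"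
        proof -
          have tt: "trunc_nuc K (Xs + t \<cdot>\<^sub>m D') = T - t" using tn t by simp
          show ?thesis using t unfolding tt TK by (simp add: field_simps)
        qed
      qed
    qed
    have lim2: "((\<lambda>t. ((f (Xs + t \<cdot>\<^sub>m D') + \<gamma> * trunc_nuc K (Xs + t \<cdot>\<^sub>m D')) - (f Xs + \<gamma> * trunc_nuc K Xs)) / t)
        \<longlongrightarrow> df - \<gamma>) (at_right 0)"
      by (rule Lim_transform_eventually[OF lim ev])
    have "d = df - \<gamma>"
      using tendsto_unique[OF _ d(1)[unfolded has_dir_deriv_def] lim2] by simp
    then show False using d(2) dfG gG by simp
  qed
  have sz: "\<And>k. K \<le> k \<Longrightarrow> k < m \<Longrightarrow> s k = 0"
    using Tz sum_nonneg_eq_0_iff[of "{K..<m}" s] snn unfolding T_def by auto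
  have "vec_space.rank m Xs \<le> K" unfolding Xsv by (rule rank_svdm) (use K sz in auto)
  then show ?thesis using TK Tz by simp
qed

end
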